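(* Let $M=p_i^{n_i}p_j^{n_j}p_k^{n_k}$ with distinct primes $p_i,p_j,p_k$ and $n_i,n_j,n_k\in\mathbb{N}$, let $A\oplus B=\mathbb{Z}_M$ with $\Phi_M(X)\mid A(X)$, and assume $A$ is fibered on $D$-grids, where $D=M/(p_ip_jp_k)$. Let $a,a'\in A$ and $b,b'\in B$. If $(b*F(a))\cap(b'*F(a'))\neq\emptyset$, then $b=b'$ and $F(a)=F(a')$.
   Context: $A\oplus B=\mathbb{Z}_M$ means every element of $\mathbb{Z}_M$ is uniquely $a+b$, $a\in A$, $b\in B$; $A(X)=\sum_{a\in A}X^a$ ($A$ in $\{0,\dots,M-1\}$), $\Phi_M$ the $M$-th cyclotomic polynomial. For $d\mid M$, $\Lambda(x,d)=\{x'\in\mathbb{Z}_M:d\mid x-x'\}$. For $\nu\in\{i,j,k\}$, $F_\nu=\{0,M/p_\nu,\dots,(p_\nu-1)M/p_\nu\}$, $x*Y=\{x+y:y\in Y\}$. A set $Y$ is fibered in the $p_\nu$ direction if $Y$ is a union of sets $y*F_\nu$ with $y\in Y$. "$A$ is fibered on $D$-grids" means for every $a\in A$, $A\cap\Lambda(a,D)$ is fibered in some direction $p_\nu$. The function $\kappa:A\to\{i,j,k\}$: for each $D$-grid $\Lambda(x,D)$ meeting $A$, fix one direction $\nu(x)$ in which $A\cap\Lambda(x,D)$ is fibered (chosen arbitrarily if several) and set $\kappa(a)=\nu(x)$ for all $a\in A\cap\Lambda(x,D)$. Define $F(a)=a*F_{\kappa(a)}$ for $a\in A$ (so $F(a)\subset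 A$). *)

theory Defs
  imports "HOL-Complex_Analysis.Complex_Analysis" "HOL-Computational_Algebra.Polynomial"
begin

(* Z_M is represented by {0..<M} with addition mod M. *)

definition cyclotomic :: "nat \<Rightarrow> complex poly" where
  "cyclotomic M = (\<Prod>k\<in>{k. k < M \<and> coprime k M}. [:- cis (2 * pi * real k / real M), 1:])"

definition mask_poly :: "nat set \<Rightarrow> complex poly" where
  "mask_poly A = (\<Sum>a\<in>A. monom 1 a)"

definition tiling :: "nat \<Rightarrow> nat set \<Rightarrow> nat set \<Rightarrow> bool" where
  "tiling M A B \<longleftrightarrow> A \<subseteq> {0..<M} \<and> B \<subseteq> {0..<M} \<and>
     (\<forall>x\<in>{0..<M}. \<exists>!(a,b). a \<in> A \<and> b \<in> B \<and> (a + b) mod M = x)"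

definition translate :: "nat \<Rightarrow> nat \<Rightarrow> nat set \<Rightarrow> nat set" where
  "translate M x Y = {(x + y) mod M | y. y \<in> Y}"

definition grid :: "nat \<Rightarrow> nat \<Rightarrow> nat \<Rightarrow> nat set" where
  "grid M x d = {x'. x' < M \<and> x mod d = x' mod d}"

definition fiber :: "nat \<Rightarrow> nat \<Rightarrow> nat set" where
  "fiber M p = {t * (M div p) | t. t < p}"

definition fibered :: "nat \<Rightarrow> nat set \<Rightarrow> nat \<Rightarrow> bool" where
  "fibered M Y p \<longleftrightarrow> Y = (\<Union>y\<in>Y. translate M y (fiber M p))"

definition fibered_on_grids :: "nat \<Rightarrow> nat set \<Rightarrow> nat \<Rightarrow> nat set \<Rightarrow> bool" where
  "fibered_on_grids M A D P \<longleftrightarrow> (\<forall>a\<in>A. \<exists>p\<in>P. fibered M (A \<inter> grid M a D) p)"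

definition admissible_kappa :: "nat \<Rightarrow> nat set \<Rightarrow> nat \<Rightarrow> nat set \<Rightarrow> (nat \<Rightarrow> nat) \<Rightarrow> bool" where
  "admissible_kappa M A D P \<kappa> \<longleftrightarrow>
     (\<forall>a\<in>A. \<kappa> a \<in> P \<and> fibered M (A \<inter> grid M a D) (\<kappa> a)) \<and>
     (\<forall>a\<in>A. \<forall>a'\<in>A. a mod D = a' mod D \<longrightarrow> \<kappa> a = \<kappa> a')"

end

theory Submission
  imports Defs
begin

lemma shift_mod:
  fixes a k m p M :: nat
  assumes "M = m * p"
  shows "(a + k * m) mod M = (a + (k mod p) * m) mod M"
proof -
  have "k * m = (k mod p) * m + (k div p) * M"
    using assms by (metis add.commute div_mult_mod_eq distrib_right mult.assoc mult.commute)
  then show ?thesis by (simp add: add.assoc[symmetric])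
qed

lemma T_sub:
  fixes a c p M :: nat
  assumes "p dvd M" "0 < p" "c \<in> translate M a (fiber M p)"
  shows "translate M c (fiber M p) \<subseteq> translate M a (fiber M p)"
proof
  define m where "m = M div p"
  have Mm: "M = m * p" using assms(1) m_def by simp
  obtain t where t: "t < p" "c = (a + t * m) mod M"
    using assms(3) unfolding translate_def fiber_def m_def by auto
  fix x assume "x \<in> translate M c (fiber M p)"
  then obtain s where s: "x = (c + s * m) mod M"
    unfolding translate_def fiber_def m_def by auto
  have "x = (a + (t + s) * m) mod M"
    using s t by (simp add: mod_add_left_eq distrib_right add.assoc)
  also have "\<dots> = (a + ((t + s) mod p) * m) mod M" using shift_mod[OF Mm] by blast
  finally have xe: "x = (a + ((t + s) mod p) * m) mod M" .
  have "(t + s) mod p < p" using assms(2) by simp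
  then show "x \<in> translate M a (fiber M p)"
    unfolding translate_def fiber_def m_def[symmetric] using xe by blast
qed

lemma T_mem:
  fixes a c p M :: nat
  assumes "p dvd M" "0 < p" "c \<in> translate M a (fiber M p)" "a < M"
  shows "a \<in> translate M c (fiber M p)"
proof -
  define m where "m = M div p"
  have Mm: "M = m * p" using assms(1) m_def by simp
  obtain t where t: "t < p" "c = (a + t * m) mod M"
    using assms(3) unfolding translate_def fiber_def m_def by auto
  have "(c + ((p - t) mod p) * m) mod M = (a + (t + (p - t) mod p) * m) mod M"
    using t by (simp add: mod_add_left_eq distrib_right add.assoc)
  also have "\<dots> = (a + ((t + (p - t) mod p) mod p) * m) mod M" using shift_mod[OF Mm] by blast
  also have "(t + (p - t) mod p) mod p = 0"
    using t by (simp add: mod_add_right_eq)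
  finally have "a = (c + ((p - t) mod p) * m) mod M" using assms(4) by simp
  moreover have "(p - t) mod p < p" using assms(2) by simp
  ultimately show ?thesis
    unfolding translate_def fiber_def m_def[symmetric] by blast
qed

lemma T_eq:
  fixes a c p M :: nat
  assumes "p dvd M" "0 < p" "c \<in> translate M a (fiber M p)" "a < M"
  shows "translate M c (fiber M p) = translate M a (fiber M p)"
  using T_sub[OF assms(1,2,3)] T_sub[OF assms(1,2) T_mem[OF assms]] by blast

lemma T_modD:
  fixes a c p M D :: nat
  assumes "D dvd M div p" "p dvd M" "c \<in> translate M a (fiber M p)"
  shows "c mod D = a mod D"
proof -
  obtain t where t: "c = (a + t * (M div p)) mod M"
    using assms(3) unfolding translate_def fiber_def by auto
  have DM: "D dvd M" using assms(1,2) by (metis dvd_div_mult_self dvd_mult2)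
  have "c mod D = (a + t * (M div p)) mod D" using t DM by (simp add: mod_mod_cancel)
  also have "\<dots> = a mod D"
  proof -
    obtain k where "M div p = D * k" using assms(1) by (auto elim: dvdE)
    then have "a + t * (M div p) = a + (t * k) * D" by simp
    then show ?thesis by (simp only: mod_mult_self1)
  qed
  finally show ?thesis .
qed

theorem lemma7p3:
  fixes pi pj pk ni nj nk M D :: nat and A B :: "nat set" and \<kappa> :: "nat \<Rightarrow> nat"
    and a a' b b' :: nat
  assumes "prime pi" "prime pj" "prime pk"
    and "pi \<noteq> pj" "pi \<noteq> pk" "pj \<noteq> pk"
    and "ni \<ge> 1" "nj \<ge> 1" "nk \<ge> 1"
    and "M = pi ^ ni * pj ^ nj * pk ^ nk"
    and "tiling M A B"
    and "cyclotomic M dvd mask_poly A"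
    and "D = M div (pi * pj * pk)"
    and "fibered_on_grids M A D {pi, pj, pk}"
    and "admissible_kappa M A D {pi, pj, pk} \<kappa>"
    and "a \<in> A" "a' \<in> A" "b \<in> B" "b' \<in> B"
    and "translate M b (translate M a (fiber M (\<kappa> a))) \<inter>
         translate M b' (translate M a' (fiber M (\<kappa> a'))) \<noteq> {}"
  shows "b = b' \<and> translate M a (fiber M (\<kappa> a)) = translate M a' (fiber M (\<kappa> a'))"
proof -
  have dvdM: "pi * pj * pk dvd M"
  proof -
    have "pi dvd pi ^ ni" "pj dvd pj ^ nj" "pk dvd pk ^ nk"
      using assms(7-9) by (simp_all add: dvd_power)
    then show ?thesis using assms(10) by (simp add: mult_dvd_mono)
  qed
  have MD: "M = pi * pj * pk * D" using dvdM assms(13) by simp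
  have Mpos: "M > 0" using assms(1-3,10) by (simp add: prime_gt_0_nat)
  have Pprops: "p dvd M \<and> 0 < p \<and> D dvd M div p" if pP: "p \<in> {pi, pj, pk}" for p
  proof -
    have pp: "0 < pi" "0 < pj" "0 < pk" using assms(1-3) by (simp_all add: prime_gt_0_nat)
    consider "p = pi" | "p = pj" | "p = pk" using pP by blast
    then show ?thesis
    proof cases
      case 1 then have "M div p = pj * pk * D" using MD pp by (simp add: mult.assoc)
      then show ?thesis using 1 MD pp by simp
    next
      case 2 then have "M div p = pi * pk * D" using MD pp by (simp add: mult.commute mult.left_commute)
      then show ?thesis using 2 MD pp by simp
    next
      case 3 then have "M div p = pi * pj * D" using MD pp by (simp add: mult.commute mult.left_commute)
      then show ?thesis using 3 MD pp by simp
    qed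
  qed
  have AM: "A \<subseteq> {0..<M}" using assms(11) unfolding tiling_def by blast
  have kap: "\<kappa> x \<in> {pi, pj, pk}" "fibered M (A \<inter> grid M x D) (\<kappa> x)" if "x \<in> A" for x
    using assms(15) that unfolding admissible_kappa_def by blast+
  have TsubA: "translate M x (fiber M (\<kappa> x)) \<subseteq> A" if "x \<in> A" for x
  proof -
    have "x \<in> A \<inter> grid M x D" using that AM unfolding grid_def by auto
    then show ?thesis using kap(2)[OF that] unfolding fibered_def by blast
  qed
  obtain x where x1: "x \<in> translate M b (translate M a (fiber M (\<kappa> a)))"
    and x2: "x \<in> translate M b' (translate M a' (fiber M (\<kappa> a')))" using assms(20) by blast
  obtain c1 where c1: "c1 \<in> translate M a (fiber M (\<kappa> a))" "x = (b + c1) mod M"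
    using x1 unfolding translate_def[of M b] by auto
  obtain c2 where c2: "c2 \<in> translate M a' (fiber M (\<kappa> a'))" "x = (b' + c2) mod M"
    using x2 unfolding translate_def[of M b'] by auto
  have c1A: "c1 \<in> A" using c1(1) TsubA[OF assms(16)] by blast
  have c2A: "c2 \<in> A" using c2(1) TsubA[OF assms(17)] by blast
  have "x \<in> {0..<M}" using c1(2) Mpos by simp
  then have "\<exists>!(u,v). u \<in> A \<and> v \<in> B \<and> (u + v) mod M = x"
    using assms(11) unfolding tiling_def by blast
  moreover have "c1 \<in> A \<and> b \<in> B \<and> (c1 + b) mod M = x" using c1A assms(18) c1(2) by (simp add: add.commute)
  moreover have "c2 \<in> A \<and> b' \<in> B \<and> (c2 + b') mod M = x" using c2A assms(19) c2(2) by (simp add: add.commute)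
  ultimately have eq: "c1 = c2 \<and> b = b'" by auto
  have Pa: "\<kappa> a dvd M" "0 < \<kappa> a" "D dvd M div \<kappa> a" using Pprops[OF kap(1)[OF assms(16)]] by auto
  have Pa': "\<kappa> a' dvd M" "0 < \<kappa> a'" "D dvd M div \<kappa> a'" using Pprops[OF kap(1)[OF assms(17)]] by auto
  have "c1 mod D = a mod D" using T_modD[OF Pa(3) Pa(1) c1(1)] .
  moreover have "c2 mod D = a' mod D" using T_modD[OF Pa'(3) Pa'(1) c2(1)] .
  ultimately have "a mod D = a' mod D" using eq by simp
  then have kk: "\<kappa> a = \<kappa> a'" using assms(15,16,17) unfolding admissible_kappa_def by blast
  have aM: "a < M" "a' < M" using AM assms(16,17) by auto
  have "translate M a (fiber M (\<kappa> a)) = translate M c1 (fiber M (\<kappa> a))"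
    using T_eq[OF Pa(1,2) c1(1) aM(1)] by simp
  also have "\<dots> = translate M a' (fiber M (\<kappa> a'))"
    using T_eq[OF Pa'(1,2) c2(1) aM(2)] eq kk by simp
  finally show ?thesis using eq by simp
qed

end
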